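(* Let $\mathbf d=(d_1,\dots,d_n)$ be a graphical degree sequence with $n$ even. Then $\overline{\mu}(\mathbf d)>0$ if and only if $(d_1-1,\dots,d_n-1)$ is also graphical.
   Context: All graphs are finite and simple. A sequence of nonnegative integers $(d_1,\dots,d_n)$ is graphical if some simple graph on $\{v_1,\dots,v_n\}$ has $d(v_i)=d_i$ for all $i$ (it realizes the sequence); a sequence with a negative entry is not graphical. For a graph $G=(V,E)$ on $n$ vertices, a fractional vertex cover is a function $f:V\to[0,\infty)$ with $f(u)+f(v)\ge 1$ for every edge $uv\in E$; $\tau^*(G)$ denotes the minimum of $\sum_{v\in V}f(v)$ over all fractional vertex covers. For $E'\subseteq E$ let $G-E'=(V,E\setminus E')$, and $\mu(G)=\min\{|E'| : E'\subseteq E,\ \tau^*(G-E')<n/2\}$. $\overline{\mu}(\mathbf d)$ is the maximum of $\mu(G)$ over all graphs realizing $\mathbf d$. *)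

theory Defs
  imports Complex_Main "HOL-Library.Extended_Nat"
begin

text \<open>Vertices are 0,...,n-1 (vertex v_i of the paper is i-1). A simple graph is a set of
  2-element subsets of the vertex set.\<close>

definition simple_graph :: "nat \<Rightarrow> nat set set \<Rightarrow> bool" where
  "simple_graph n E \<longleftrightarrow> (\<forall>e\<in>E. \<exists>u v. e = {u, v} \<and> u \<noteq> v \<and> u < n \<and> v < n)"

definition deg :: "nat set set \<Rightarrow> nat \<Rightarrow> nat" where
  "deg E v = card {e \<in> E. v \<in> e}"

text \<open>Integer sequences, so that negative entries are allowed (and are never realizable).\<close>
definition realizes :: "nat \<Rightarrow> (nat \<Rightarrow> int) \<Rightarrow> nat set set \<Rightarrow> bool" where
  "realizes n d E \<longleftrightarrow> simple_graph n E \<and> (\<forall>i<n. int (deg E i) = d i)"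

definition graphical :: "nat \<Rightarrow> (nat \<Rightarrow> int) \<Rightarrow> bool" where
  "graphical n d \<longleftrightarrow> (\<exists>E. realizes n d E)"

definition frac_cover :: "nat \<Rightarrow> nat set set \<Rightarrow> (nat \<Rightarrow> real) \<Rightarrow> bool" where
  "frac_cover n E f \<longleftrightarrow> (\<forall>v<n. f v \<ge> 0) \<and> (\<forall>u v. {u, v} \<in> E \<longrightarrow> f u + f v \<ge> 1)"

definition tau_star :: "nat \<Rightarrow> nat set set \<Rightarrow> real" where
  "tau_star n E = Inf {(\<Sum>v<n. f v) | f. frac_cover n E f}"

text \<open>Minimum over an empty set is taken to be infinity.\<close>
definition mu :: "nat \<Rightarrow> nat set set \<Rightarrow> enat" where
  "mu n E = Inf {enat (card E') | E'. E' \<subseteq> E \<and> tau_star n (E - E') < real n / 2}"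

definition mu_bar :: "nat \<Rightarrow> (nat \<Rightarrow> int) \<Rightarrow> enat" where
  "mu_bar n d = Sup {mu n E | E. realizes n d E}"

end

theory Submission
  imports Defs "HOL-Combinatorics.Orbits"
begin
lemma simple_graph_finite:
  assumes "simple_graph n E" shows "finite E"
proof -
  have "E \<subseteq> Pow {..<n}" using assms unfolding simple_graph_def by auto
  then show ?thesis by (rule finite_subset) simp
qed

lemma simple_graph_sub: "simple_graph n E \<Longrightarrow> E' \<subseteq> E \<Longrightarrow> simple_graph n E'"
  unfolding simple_graph_def by blast

lemma simple_graph_edge: "simple_graph n E \<Longrightarrow> {u,v} \<in> E \<Longrightarrow> u \<noteq> v \<and> u < n \<and> v < n"
  unfolding simple_graph_def by (auto simp: doubleton_eq_iff)

lemma deg_remove: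
  assumes "finite E" "x \<in> E"
  shows "deg (E - {x}) v = (if v \<in> x then deg E v - 1 else deg E v)"
proof -
  have "{e \<in> E - {x}. v \<in> e} = {e \<in> E. v \<in> e} - {x}" by auto
  then show ?thesis using assms unfolding deg_def
    by (auto simp: card_Diff_singleton_if)
qed

lemma deg_insert:
  assumes "finite E" "x \<notin> E"
  shows "deg (insert x E) v = (if v \<in> x then Suc (deg E v) else deg E v)"
proof -
  have "{e \<in> insert x E. v \<in> e} = (if v \<in> x then insert x {e \<in> E. v \<in> e} else {e \<in> E. v \<in> e})" by auto
  then show ?thesis using assms unfolding deg_def by auto
qed

lemma deg_pos: "finite E \<Longrightarrow> x \<in> E \<Longrightarrow> v \<in> x \<Longrightarrow> deg E v > 0"
  unfolding deg_def by (metis (mono_tags, lifting) card_gt_0_iff empty_iff finite_subset mem_Collect_eq subsetI)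

definition switch :: "nat set set \<Rightarrow> nat \<Rightarrow> nat \<Rightarrow> nat \<Rightarrow> nat \<Rightarrow> nat set set" where
  "switch E a b c e = insert {a,c} (insert {b,e} (E - {{a,b},{c,e}}))"

lemma switch_props:
  assumes G: "simple_graph n E" and d: "distinct [a,b,c,e]"
    and in1: "{a,b} \<in> E" and in2: "{c,e} \<in> E" and out1: "{a,c} \<notin> E" and out2: "{b,e} \<notin> E"
  shows "simple_graph n (switch E a b c e) \<and> (\<forall>v. deg (switch E a b c e) v = deg E v)"
proof
  have fin: "finite E" using G by (rule simple_graph_finite)
  have lt: "a < n" "b < n" "c < n" "e < n" using simple_graph_edge[OF G in1] simple_graph_edge[OF G in2] by auto
  show "simple_graph n (switch E a b c e)"
    using G lt d unfolding simple_graph_def switch_def by auto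
  show "\<forall>v. deg (switch E a b c e) v = deg E v"
  proof
    fix v
    let ?E1 = "E - {{a,b}}"
    let ?E2 = "?E1 - {{c,e}}"
    let ?E3 = "insert {b,e} ?E2"
    have ne: "{c,e} \<noteq> {a,b}" "{a,c} \<noteq> {b,e}" using d by (auto simp: doubleton_eq_iff)
    have eq: "switch E a b c e = insert {a,c} ?E3" unfolding switch_def by auto
    have f1: "finite ?E1" "finite ?E2" "finite ?E3" using fin by auto
    have d1: "deg ?E1 v = (if v \<in> {a,b} then deg E v - 1 else deg E v)"
      by (rule deg_remove[OF fin in1])
    have d2: "deg ?E2 v = (if v \<in> {c,e} then deg ?E1 v - 1 else deg ?E1 v)"
      by (rule deg_remove) (use f1 in2 ne in auto)
    have d3: "deg ?E3 v = (if v \<in> {b,e} then Suc (deg ?E2 v) else deg ?E2 v)"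
      by (rule deg_insert) (use f1 out2 in auto)
    have d4: "deg (insert {a,c} ?E3) v = (if v \<in> {a,c} then Suc (deg ?E3 v) else deg ?E3 v)"
      by (rule deg_insert) (use f1 out1 ne in auto)
    have p1: "v \<in> {a,b} \<Longrightarrow> deg E v > 0" using deg_pos[OF fin in1] by auto
    have p2: "v \<in> {c,e} \<Longrightarrow> deg ?E1 v > 0" using deg_pos[OF f1(1), of "{c,e}"] in2 ne by auto
    have p3: "v \<in> {c,e} \<Longrightarrow> deg E v > 0" using deg_pos[OF fin in2] by auto
    show "deg (switch E a b c e) v = deg E v"
      unfolding eq d4 d3 d2 d1 using d p1 p2 p3 by auto
  qed
qed

definition matchable :: "nat set set \<Rightarrow> nat set \<Rightarrow> bool" where
  "matchable E S \<longleftrightarrow> (\<exists>p. \<forall>w\<in>S. p w \<in> S \<and> p w \<noteq> w \<and> p (p w) = w \<and> {w, p w} \<in> E)"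

lemma matchable_empty: "matchable E {}"
  unfolding matchable_def by simp

lemma matchable_pair: "u \<noteq> v \<Longrightarrow> {u,v} \<in> E \<Longrightarrow> matchable E {u,v}"
  unfolding matchable_def
  by (rule exI[of _ "\<lambda>w. if w = u then v else u"]) (auto simp: insert_commute)

lemma matchable_union:
  assumes "matchable E S" "matchable E T" "S \<inter> T = {}"
  shows "matchable E (S \<union> T)"
proof -
  obtain p where p: "\<forall>w\<in>S. p w \<in> S \<and> p w \<noteq> w \<and> p (p w) = w \<and> {w, p w} \<in> E"
    using assms(1) unfolding matchable_def by blast
  obtain q where q: "\<forall>w\<in>T. q w \<in> T \<and> q w \<noteq> w \<and> q (q w) = w \<and> {w, q w} \<in> E"
    using assms(2) unfolding matchable_def by blast
  show ?thesis unfolding matchable_def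
    by (rule exI[of _ "\<lambda>w. if w \<in> S then p w else q w"]) (use p q assms(3) in auto)
qed

lemma matchable_transfer:
  assumes "matchable E S" "\<And>u v. u \<in> S \<Longrightarrow> v \<in> S \<Longrightarrow> {u,v} \<in> E \<Longrightarrow> {u,v} \<in> E'"
  shows "matchable E' S"
  using assms unfolding matchable_def by metis

lemma matchable_minus_one:
  assumes R: "realizes n d E" and M: "matchable E {..<n}"
  shows "graphical n (\<lambda>i. d i - 1)"
proof -
  obtain p where p: "\<forall>w\<in>{..<n}. p w \<in> {..<n} \<and> p w \<noteq> w \<and> p (p w) = w \<and> {w, p w} \<in> E"
    using M unfolding matchable_def by blast
  have G: "simple_graph n E" using R unfolding realizes_def by simp
  have fin: "finite E" using simple_graph_finite[OF G] .
  define Mt where "Mt = (\<lambda>w. {w, p w}) ` {..<n}"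
  define H where "H = E - Mt"
  have "realizes n (\<lambda>i. d i - 1) H"
    unfolding realizes_def
  proof (intro conjI allI impI)
    show "simple_graph n H" using G unfolding H_def by (rule simple_graph_sub) auto
  next
    fix v assume v: "v < n"
    have "{e \<in> H. v \<in> e} = {e \<in> E. v \<in> e} - {{v, p v}}"
    proof (intro set_eqI iffI)
      fix e assume e: "e \<in> {e \<in> H. v \<in> e}"
      then obtain "e \<in> E" "v \<in> e" "e \<notin> Mt" unfolding H_def by auto
      moreover have "{v, p v} \<in> Mt" unfolding Mt_def using v by auto
      ultimately show "e \<in> {e \<in> E. v \<in> e} - {{v, p v}}" by auto
    next
      fix e assume e: "e \<in> {e \<in> E. v \<in> e} - {{v, p v}}"
      then have eE: "e \<in> E" "v \<in> e" "e \<noteq> {v, p v}" by auto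
      have "e \<notin> Mt"
      proof
        assume "e \<in> Mt"
        then obtain w where w: "w < n" "e = {w, p w}" unfolding Mt_def by auto
        then have "v = w \<or> v = p w" using eE by auto
        then show False
        proof
          assume "v = w" then show False using w eE by auto
        next
          assume "v = p w" then have "p v = w" using p w by auto
          then show False using w eE \<open>v = p w\<close> by (auto simp: insert_commute)
        qed
      qed
      then show "e \<in> {e \<in> H. v \<in> e}" using eE unfolding H_def by auto
    qed
    moreover have "{v, p v} \<in> {e \<in> E. v \<in> e}" using p v by auto
    ultimately have "deg H v = deg E v - 1" unfolding deg_def using fin by (simp add: card_Diff_singleton)
    moreover have "deg E v > 0" using deg_pos[OF fin, of "{v, p v}"] p v by auto
    moreover have "int (deg E v) = d v" using R v unfolding realizes_def by auto
    ultimately show "int (deg H v) = d v - 1" by simp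
  qed
  then show ?thesis unfolding graphical_def by blast
qed

lemma matchable_tau:
  assumes M: "matchable E {..<n}"
  shows "tau_star n E \<ge> real n / 2"
proof -
  obtain p where p: "\<forall>w\<in>{..<n}. p w \<in> {..<n} \<and> p w \<noteq> w \<and> p (p w) = w \<and> {w, p w} \<in> E"
    using M unfolding matchable_def by blast
  have bij: "bij_betw p {..<n} {..<n}"
    by (rule bij_betwI[of _ _ _ p]) (use p in auto)
  let ?S = "{(\<Sum>v<n. f v) | f. frac_cover n E f}"
  have ne: "?S \<noteq> {}"
  proof -
    have "frac_cover n E (\<lambda>_. 1)" unfolding frac_cover_def by auto
    then show ?thesis by blast
  qed
  have lb: "x \<ge> real n / 2" if "x \<in> ?S" for x
  proof -
    obtain f where f: "x = (\<Sum>v<n. f v)" "frac_cover n E f" using \<open>x \<in> ?S\<close> by blast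
    have "(\<Sum>v<n. f (p v)) = (\<Sum>v<n. f v)"
      using sum.reindex_bij_betw[OF bij, of f] by simp
    moreover have "(\<Sum>v<n. f v + f (p v)) \<ge> (\<Sum>v<n. (1::real))"
      by (rule sum_mono) (use f(2) p in \<open>auto simp: frac_cover_def\<close>)
    ultimately have "2 * (\<Sum>v<n. f v) \<ge> real n" by (simp add: sum.distrib)
    then show ?thesis using f by simp
  qed
  show ?thesis unfolding tau_star_def by (rule cInf_greatest[OF ne]) (use lb in blast)
qed

lemma tau_bdd: "bdd_below {(\<Sum>v<n. f v) | f. frac_cover n E f}"
  unfolding bdd_below_def frac_cover_def
  by (rule exI[of _ 0]) (auto intro: sum_nonneg)

lemma tau_lower: "frac_cover n E f \<Longrightarrow> tau_star n E \<le> (\<Sum>v<n. f v)"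
  unfolding tau_star_def by (rule cInf_lower[OF _ tau_bdd]) blast

lemma mu_pos_iff:
  assumes G: "simple_graph n E"
  shows "mu n E > 0 \<longleftrightarrow> tau_star n E \<ge> real n / 2"
proof
  assume "mu n E > 0"
  show "tau_star n E \<ge> real n / 2"
  proof (rule ccontr)
    assume "\<not> ?thesis"
    then have "tau_star n (E - {}) < real n / 2" by simp
    then have "enat (card ({}::nat set set)) \<in> {enat (card E') | E'. E' \<subseteq> E \<and> tau_star n (E - E') < real n / 2}"
      by blast
    then have "mu n E \<le> enat (card ({}::nat set set))" unfolding mu_def by (rule Inf_lower)
    then have "mu n E \<le> 0" by (simp add: zero_enat_def)
    with \<open>mu n E > 0\<close> show False by simp
  qed
next
  assume t: "tau_star n E \<ge> real n / 2"
  have fin: "finite E" using simple_graph_finite[OF G] .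
  have "1 \<le> mu n E" unfolding mu_def
  proof (rule Inf_greatest)
    fix x assume "x \<in> {enat (card E') | E'. E' \<subseteq> E \<and> tau_star n (E - E') < real n / 2}"
    then obtain E' where E': "x = enat (card E')" "E' \<subseteq> E" "tau_star n (E - E') < real n / 2" by blast
    have "E' \<noteq> {}" using E' t by auto
    moreover have "finite E'" using E' fin finite_subset by blast
    ultimately have "card E' \<ge> 1" by (simp add: Suc_leI card_gt_0_iff)
    then show "1 \<le> x" using E' by (simp add: one_enat_def)
  qed
  then show "mu n E > 0" by (rule order_less_le_trans[OF zero_less_one])
qed

lemma mu_bar_pos_iff: "mu_bar n d > 0 \<longleftrightarrow> (\<exists>E. realizes n d E \<and> mu n E > 0)"
  unfolding mu_bar_def by (auto simp: less_Sup_iff)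

lemma sum_if_card:
  assumes "S \<subseteq> {..<(n::nat)}"
  shows "(\<Sum>v<n. if v \<in> S then (c::real) else 0) = c * card S"
proof -
  have "(\<Sum>v<n. if v \<in> S then c else 0) = (\<Sum>v\<in>{..<n} \<inter> S. c)"
    using sum.inter_restrict[of "{..<n}" "\<lambda>_. c" S] by simp
  also have "{..<n} \<inter> S = S" using assms by auto
  finally show ?thesis by simp
qed

definition nbhd :: "nat \<Rightarrow> nat set set \<Rightarrow> nat set \<Rightarrow> nat set" where
  "nbhd n E X = {v. v < n \<and> (\<exists>x\<in>X. {x,v} \<in> E)}"

lemma tau_hall:
  assumes G: "simple_graph n E" and t: "tau_star n E \<ge> real n / 2" and X: "X \<subseteq> {..<n}"
  shows "card X \<le> card (nbhd n E X)"
proof -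
  let ?N = "nbhd n E X"
  let ?A = "X - ?N" and ?B = "?N - X"
  define f where "f v = (1/2::real) + (if v \<in> ?B then 1/2 else 0) - (if v \<in> ?A then 1/2 else 0)" for v
  have cov: "frac_cover n E f"
    unfolding frac_cover_def
  proof (intro conjI allI impI)
    fix v assume "v < n" show "f v \<ge> 0" unfolding f_def by auto
  next
    fix u v assume e: "{u,v} \<in> E"
    have uv: "u \<noteq> v" "u < n" "v < n" using simple_graph_edge[OF G e] by auto
    have e': "{v,u} \<in> E" using e by (simp add: insert_commute)
    have A1: "u \<in> ?A \<Longrightarrow> v \<in> ?B" using e e' uv unfolding nbhd_def by blast
    have A2: "v \<in> ?A \<Longrightarrow> u \<in> ?B" using e e' uv unfolding nbhd_def by blast
    have AB: "?A \<inter> ?B = {}" by auto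
    have fA: "f w = 0" if "w \<in> ?A" for w using that AB unfolding f_def by auto
    have fB: "f w = 1" if "w \<in> ?B" for w using that AB unfolding f_def by auto
    have fg: "f w \<ge> 1/2" if "w \<notin> ?A" for w using that unfolding f_def by auto
    show "1 \<le> f u + f v"
    proof (cases "u \<in> ?A")
      case True then show ?thesis using A1 fA fB by auto
    next
      case False
      show ?thesis
      proof (cases "v \<in> ?A")
        case True then show ?thesis using A2 fA fB by auto
      next
        case False then have "f v \<ge> 1/2" "f u \<ge> 1/2" using fg \<open>u \<notin> ?A\<close> by auto
        then show ?thesis by linarith
      qed
    qed
  qed
  have NB: "?N \<subseteq> {..<n}" unfolding nbhd_def by auto
  have fin: "finite ?A" "finite ?B" using X NB by (meson finite_Diff finite_lessThan finite_subset)+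
  have "(\<Sum>v<n. f v) = real n / 2 + card ?B / 2 - card ?A / 2"
  proof -
    have sA: "(\<Sum>v<n. (if v \<in> ?A then 1/2 else 0::real)) = card ?A / 2"
      using sum_if_card[of ?A n "1/2"] X by auto
    have sB: "(\<Sum>v<n. (if v \<in> ?B then 1/2 else 0::real)) = card ?B / 2"
      using sum_if_card[of ?B n "1/2"] NB by auto
    show ?thesis unfolding f_def using sA sB by (simp add: sum.distrib sum_subtractf)
  qed
  then have "card ?A \<le> card ?B" using tau_lower[OF cov] t by simp
  moreover have "finite X" "finite ?N" using X NB by (meson finite_lessThan finite_subset)+
  moreover have "card ?A = card X - card (X \<inter> ?N)"
    using \<open>finite X\<close> by (auto intro: card_Diff_subset_Int)
  moreover have "card ?B = card ?N - card (X \<inter> ?N)"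
    using \<open>finite ?N\<close> card_Diff_subset_Int[of ?N X] by (simp add: Int_commute)
  moreover have "card (X \<inter> ?N) \<le> card X" "card (X \<inter> ?N) \<le> card ?N"
    using \<open>finite X\<close> \<open>finite ?N\<close> by (auto intro: card_mono)
  ultimately show ?thesis by arith
qed

lemma hall:
  fixes A :: "'i \<Rightarrow> 'a set"
  assumes "finite I" "\<forall>i\<in>I. finite (A i)" "\<forall>J\<subseteq>I. card J \<le> card (\<Union> (A ` J))"
  shows "\<exists>r. inj_on r I \<and> (\<forall>i\<in>I. r i \<in> A i)"
  using assms
proof (induction "card I" arbitrary: I A rule: less_induct)
  case less
  note finI = less.prems(1) and finA = less.prems(2) and H = less.prems(3)
  have finU: "finite (\<Union> (A ` J))" if "J \<subseteq> I" for J
    using that finI finA by (meson finite_UN_I finite_subset subsetD)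
  show ?case
  proof (cases "I = {}")
    case True then show ?thesis by auto
  next
    case False
    show ?thesis
    proof (cases "\<exists>J. J \<subseteq> I \<and> J \<noteq> {} \<and> J \<noteq> I \<and> card (\<Union> (A ` J)) = card J")
      case True
      then obtain J where J: "J \<subseteq> I" "J \<noteq> {}" "J \<noteq> I" "card (\<Union> (A ` J)) = card J" by blast
      have finJ: "finite J" using J finI finite_subset by auto
      have cJ: "card J < card I" by (rule psubset_card_mono[OF finI]) (use J in auto)
      have "\<exists>r. inj_on r J \<and> (\<forall>i\<in>J. r i \<in> A i)"
        by (rule less.hyps[OF cJ finJ]) (use finA H J in auto)
      then obtain r1 where r1: "inj_on r1 J" "\<forall>i\<in>J. r1 i \<in> A i" by blast
      define K where "K = I - J"
      define U where "U = \<Union> (A ` J)"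
      have finK: "finite K" using finI K_def by auto
      have cK: "card K < card I"
      proof -
        have "card K = card I - card J" unfolding K_def using card_Diff_subset[OF finJ J(1)] .
        moreover have "card J > 0" using finJ J(2) card_gt_0_iff by blast
        ultimately show ?thesis using cJ by linarith
      qed
      have HK: "\<forall>L\<subseteq>K. card L \<le> card (\<Union> ((\<lambda>i. A i - U) ` L))"
      proof (intro allI impI)
        fix L assume L: "L \<subseteq> K"
        have LJ: "L \<inter> J = {}" "L \<union> J \<subseteq> I" using L J unfolding K_def by auto
        have finL: "finite L" using L finK finite_subset by auto
        have eq: "\<Union> ((\<lambda>i. A i - U) ` L) = \<Union> (A ` (L \<union> J)) - U" unfolding U_def by auto
        have "card (\<Union> (A ` (L \<union> J))) - card U \<le> card (\<Union> (A ` (L \<union> J)) - U)"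
          by (rule diff_card_le_card_Diff) (use finU[OF LJ(2)] finU[OF J(1)] in \<open>auto simp: U_def\<close>)
        moreover have "card (L \<union> J) \<le> card (\<Union> (A ` (L \<union> J)))" using H LJ(2) by blast
        moreover have "card (L \<union> J) = card L + card J" using LJ finL finJ by (simp add: card_Un_disjoint)
        moreover have "card U = card J" using J U_def by simp
        ultimately show "card L \<le> card (\<Union> ((\<lambda>i. A i - U) ` L))" unfolding eq by linarith
      qed
      obtain r2 where r2: "inj_on r2 K" "\<forall>i\<in>K. r2 i \<in> A i - U"
        using less.hyps[OF cK finK, of "\<lambda>i. A i - U"] finA HK unfolding K_def by auto
      define r where "r i = (if i \<in> J then r1 i else r2 i)" for i
      have "inj_on r I"
      proof (rule inj_onI)
        fix i j assume ij: "i \<in> I" "j \<in> I" "r i = r j"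
        show "i = j"
        proof (cases "i \<in> J"; cases "j \<in> J")
          assume "i \<in> J" "j \<in> J" then show ?thesis using ij r1 unfolding r_def by (auto dest: inj_onD)
        next
          assume "i \<in> J" "j \<notin> J"
          have "r i \<in> U" using r1 \<open>i \<in> J\<close> unfolding r_def U_def by auto
          moreover have "r j \<notin> U" using r2 \<open>j \<notin> J\<close> ij(2) unfolding r_def K_def by auto
          ultimately show ?thesis using ij by auto
        next
          assume "i \<notin> J" "j \<in> J"
          have "r j \<in> U" using r1 \<open>j \<in> J\<close> unfolding r_def U_def by auto
          moreover have "r i \<notin> U" using r2 \<open>i \<notin> J\<close> ij(1) unfolding r_def K_def by auto
          ultimately show ?thesis using ij by auto
        next
          assume "i \<notin> J" "j \<notin> J" then show ?thesis using ij r2 unfolding r_def K_def by (auto dest: inj_onD)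
        qed
      qed
      moreover have "\<forall>i\<in>I. r i \<in> A i" using r1 r2 unfolding r_def K_def by auto
      ultimately show ?thesis by blast
    next
      case False
      then have strict: "\<And>J. J \<subseteq> I \<Longrightarrow> J \<noteq> {} \<Longrightarrow> J \<noteq> I \<Longrightarrow> card J < card (\<Union> (A ` J))"
        using H by (metis le_neq_implies_less)
      obtain i0 where i0: "i0 \<in> I" using \<open>I \<noteq> {}\<close> by blast
      have "card {i0} \<le> card (\<Union> (A ` {i0}))" using H i0 by blast
      then have "card {i0} \<le> card (A i0)" by simp
      then have "A i0 \<noteq> {}" by auto
      then obtain x where x: "x \<in> A i0" by blast
      define I' where "I' = I - {i0}"
      have finI': "finite I'" using finI I'_def by auto
      have cI': "card I' < card I" unfolding I'_def by (rule card_Diff1_less[OF finI i0])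
      have HI': "\<forall>J\<subseteq>I'. card J \<le> card (\<Union> ((\<lambda>i. A i - {x}) ` J))"
      proof (intro allI impI)
        fix J assume J: "J \<subseteq> I'"
        show "card J \<le> card (\<Union> ((\<lambda>i. A i - {x}) ` J))"
        proof (cases "J = {}")
          case True then show ?thesis by simp
        next
          case False
          have JI: "J \<subseteq> I" "J \<noteq> I" using J i0 unfolding I'_def by auto
          have "card J < card (\<Union> (A ` J))" using strict[OF JI(1) False JI(2)] .
          moreover have eqx: "\<Union> ((\<lambda>i. A i - {x}) ` J) = \<Union> (A ` J) - {x}" by auto
          moreover have "card (\<Union> (A ` J)) - 1 \<le> card (\<Union> (A ` J) - {x})"
            using diff_card_le_card_Diff[of "{x}" "\<Union> (A ` J)"] by simp
          ultimately show ?thesis unfolding eqx by linarith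
        qed
      qed
      obtain r' where r': "inj_on r' I'" "\<forall>i\<in>I'. r' i \<in> A i - {x}"
        using less.hyps[OF cI' finI', of "\<lambda>i. A i - {x}"] finA HI' unfolding I'_def by auto
      define r where "r = r'(i0 := x)"
      have "inj_on r I"
      proof (rule inj_onI)
        fix i j assume ij: "i \<in> I" "j \<in> I" "r i = r j"
        show "i = j"
          using ij r' unfolding r_def I'_def by (cases "i = i0"; cases "j = i0") (auto dest: inj_onD)
      qed
      moreover have "\<forall>i\<in>I. r i \<in> A i" using r' x unfolding r_def I'_def by auto
      ultimately show ?thesis by blast
    qed
  qed
qed

lemma card_nbrs:
  assumes G: "simple_graph n F"
  shows "card {u. {v,u} \<in> F} = card {e \<in> F. v \<in> e}"
proof -
  have "bij_betw (\<lambda>u. {v,u}) {u. {v,u} \<in> F} {e \<in> F. v \<in> e}"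
  proof (rule bij_betwI')
    fix x y assume "x \<in> {u. {v,u} \<in> F}" "y \<in> {u. {v,u} \<in> F}"
    show "({v, x} = {v, y}) = (x = y)" by (auto simp: doubleton_eq_iff)
  next
    fix x assume "x \<in> {u. {v,u} \<in> F}" then show "{v,x} \<in> {e \<in> F. v \<in> e}" by auto
  next
    fix e assume e: "e \<in> {e \<in> F. v \<in> e}"
    then obtain a b where "e = {a,b}" using G unfolding simple_graph_def by blast
    then have "e = {v, (if a = v then b else a)}" using e by auto
    then show "\<exists>x\<in>{u. {v,u} \<in> F}. e = {v,x}" using e by auto
  qed
  then show ?thesis by (rule bij_betw_same_card)
qed

lemma nbrs_sub: "simple_graph n F \<Longrightarrow> {u. {v,u} \<in> F} \<subseteq> {..<n}"
  using simple_graph_edge by blast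

lemma kundu:
  assumes R0: "realizes n d G0" and H0: "realizes n (\<lambda>i. d i - 1) H0"
  shows "\<exists>G. realizes n d G \<and> matchable G {..<n}"
proof -
  define P where "P = (\<lambda>(G,H). realizes n d G \<and> realizes n (\<lambda>i. d i - 1) H)"
  have bound: "\<forall>y. P y \<longrightarrow> (\<lambda>(G,H). card (G \<inter> H)) y < Suc (card (Pow {..<n}))"
  proof (intro allI impI)
    fix y assume "P y"
    then obtain G H where y: "y = (G,H)" "simple_graph n G" unfolding P_def realizes_def by auto
    have "G \<subseteq> Pow {..<n}" using y(2) unfolding simple_graph_def by auto
    then have "G \<inter> H \<subseteq> Pow {..<n}" by auto
    then have "card (G \<inter> H) \<le> card (Pow {..<n})" by (rule card_mono[rotated]) simp
    then show "(\<lambda>(G,H). card (G \<inter> H)) y < Suc (card (Pow {..<n}))" using y by simp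
  qed
  have "P (G0,H0)" using R0 H0 unfolding P_def by simp
  from Lattices_Big.ex_has_greatest_nat[OF this bound]
  obtain z where z: "P z" "\<forall>y. P y \<longrightarrow> (\<lambda>(G,H). card (G \<inter> H)) y \<le> (\<lambda>(G,H). card (G \<inter> H)) z"
    by blast
  obtain G H where zGH: "z = (G,H)" by (cases z)
  have PGH: "P (G,H)" using z zGH by simp
  have max: "card (G' \<inter> H') \<le> card (G \<inter> H)" if "P (G',H')" for G' H'
    using z(2) that zGH by force
  have RG: "realizes n d G" and RH: "realizes n (\<lambda>i. d i - 1) H" using PGH unfolding P_def by auto
  have sG: "simple_graph n G" and sH: "simple_graph n H" using RG RH unfolding realizes_def by auto
  have fG: "finite G" and fH: "finite H" using sG sH simple_graph_finite by auto
  define NR where "NR v = {u. {v,u} \<in> G - H}" for v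
  define NB where "NB v = {u. {v,u} \<in> H - G}" for v
  have sR: "simple_graph n (G - H)" and sB: "simple_graph n (H - G)"
    using sG sH simple_graph_sub by auto
  have NRsub: "NR v \<subseteq> {..<n}" for v unfolding NR_def using nbrs_sub[OF sR] .
  have NBsub: "NB v \<subseteq> {..<n}" for v unfolding NB_def using nbrs_sub[OF sB] .
  have finNR: "finite (NR v)" for v using NRsub finite_subset by blast
  have rb: "card (NR v) = card (NB v) + 1" if v: "v < n" for v
  proof -
    have dG: "deg G v = card {e \<in> G \<inter> H. v \<in> e} + card {e \<in> G - H. v \<in> e}"
    proof -
      have "{e \<in> G. v \<in> e} = {e \<in> G \<inter> H. v \<in> e} \<union> {e \<in> G - H. v \<in> e}" by auto
      then show ?thesis unfolding deg_def using fG by (simp add: card_Un_disjoint disjoint_iff)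
    qed
    have dH: "deg H v = card {e \<in> G \<inter> H. v \<in> e} + card {e \<in> H - G. v \<in> e}"
    proof -
      have "{e \<in> H. v \<in> e} = {e \<in> G \<inter> H. v \<in> e} \<union> {e \<in> H - G. v \<in> e}" by auto
      then show ?thesis unfolding deg_def using fH fG by (simp add: card_Un_disjoint disjoint_iff)
    qed
    have "int (deg G v) = d v" "int (deg H v) = d v - 1" using RG RH v unfolding realizes_def by auto
    then have "deg G v = deg H v + 1" by linarith
    then show ?thesis using dG dH card_nbrs[OF sR, of v] card_nbrs[OF sB, of v]
      unfolding NR_def NB_def by simp
  qed
  have C1: "{u,z} \<in> G - H"
    if xv: "{x,v} \<in> H - G" and xu: "{x,u} \<in> G - H" and vz: "{v,z} \<in> G - H" and uz: "u \<noteq> z" for x v u z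
  proof -
    have e1: "x \<noteq> v" "x < n" "v < n" using simple_graph_edge[OF sH, of x v] xv by auto
    have e2: "x \<noteq> u" "u < n" using simple_graph_edge[OF sG, of x u] xu by auto
    have e3: "v \<noteq> z" "z < n" using simple_graph_edge[OF sG, of v z] vz by auto
    have uv: "u \<noteq> v" using xv xu by auto
    have zx: "z \<noteq> x" using xv vz by (auto simp: insert_commute)
    show ?thesis
    proof (rule ccontr)
      assume "{u,z} \<notin> G - H"
      then consider "{u,z} \<notin> G" | "{u,z} \<in> H" by blast
      then show False
      proof cases
        case 1
        let ?G' = "switch G x u v z"
        have "simple_graph n ?G' \<and> (\<forall>w. deg ?G' w = deg G w)"
          by (rule switch_props) (use sG e1 e2 e3 uv zx uz xu vz xv 1 in auto)
        then have "realizes n d ?G'" using RG unfolding realizes_def by auto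
        then have PG': "P (?G', H)" using RH unfolding P_def by simp
        have "insert {x,v} (G \<inter> H) \<subseteq> ?G' \<inter> H" using xv xu vz unfolding switch_def by auto
        moreover have "{x,v} \<notin> G \<inter> H" using xv by auto
        moreover have "finite (?G' \<inter> H)" using fH by auto
        moreover have "card (insert {x,v} (G \<inter> H)) = Suc (card (G \<inter> H))"
          using \<open>{x,v} \<notin> G \<inter> H\<close> fG by simp
        ultimately have "card (G \<inter> H) < card (?G' \<inter> H)"
          using card_mono[of "?G' \<inter> H" "insert {x,v} (G \<inter> H)"] by linarith
        then show False using max[OF PG'] by simp
      next
        case 2
        let ?H' = "switch H x v u z"
        have "simple_graph n ?H' \<and> (\<forall>w. deg ?H' w = deg H w)"
          by (rule switch_props) (use sH e1 e2 e3 uv zx uz xu vz xv 2 in auto)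
        then have "realizes n (\<lambda>i. d i - 1) ?H'" using RH unfolding realizes_def by auto
        then have PH': "P (G, ?H')" using RG unfolding P_def by simp
        have sub: "insert {x,u} (insert {v,z} (G \<inter> H - {{u,z}})) \<subseteq> G \<inter> ?H'"
          using xv xu vz unfolding switch_def by auto
        have ne: "{x,u} \<noteq> {v,z}" using e1 zx by (auto simp: doubleton_eq_iff)
        have n1: "{x,u} \<notin> G \<inter> H - {{u,z}}" "{v,z} \<notin> G \<inter> H - {{u,z}}" using xu vz by auto
        have fin1: "finite (G \<inter> H - {{u,z}})" using fG by auto
        have "card (insert {x,u} (insert {v,z} (G \<inter> H - {{u,z}}))) = card (G \<inter> H - {{u,z}}) + 2"
          using ne n1 fin1 by simp
        moreover have "card (G \<inter> H - {{u,z}}) \<ge> card (G \<inter> H) - 1"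
          by (simp add: card_Diff_singleton_if)
        moreover have "card (insert {x,u} (insert {v,z} (G \<inter> H - {{u,z}}))) \<le> card (G \<inter> ?H')"
          by (rule card_mono) (use fG sub in auto)
        ultimately have "card (G \<inter> H) < card (G \<inter> ?H')" by linarith
        then show False using max[OF PH'] by simp
      qed
    qed
  qed
  have HG: "H \<subseteq> G"
  proof (rule ccontr)
    assume "\<not> H \<subseteq> G"
    then obtain e where e: "e \<in> H - G" by blast
    then obtain p q where pq: "e = {p,q}" "p < n" using sH unfolding simple_graph_def by blast
    have "NB p \<noteq> {}" using e pq unfolding NB_def by auto
    have "\<exists>v. v < n \<and> (\<forall>w. w < n \<longrightarrow> card (NB w) \<le> card (NB v))"
    proof -
      have "finite ((\<lambda>w. card (NB w)) ` {..<n})" by simp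
      moreover have "(\<lambda>w. card (NB w)) ` {..<n} \<noteq> {}" using pq by auto
      ultimately have "Max ((\<lambda>w. card (NB w)) ` {..<n}) \<in> (\<lambda>w. card (NB w)) ` {..<n}" by (rule Max_in)
      then obtain v where "v < n" "card (NB v) = Max ((\<lambda>w. card (NB w)) ` {..<n})" by auto
      then show ?thesis by auto
    qed
    then obtain v where v: "v < n" and vmax: "\<And>w. w < n \<Longrightarrow> card (NB w) \<le> card (NB v)" by blast
    have "card (NB p) > 0" using \<open>NB p \<noteq> {}\<close> finite_subset[OF NBsub[of p]] by (simp add: card_gt_0_iff)
    then have "card (NB v) > 0" using vmax[OF pq(2)] by linarith
    then have "NB v \<noteq> {}" by auto
    then obtain x where x: "{v,x} \<in> H - G" unfolding NB_def by blast
    have xv: "{x,v} \<in> H - G" using x by (simp add: insert_commute)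
    have xn: "x < n" using simple_graph_edge[OF sB x] by auto
    have "card (NR x) > 0" using rb[OF xn] by simp
    then have "NR x \<noteq> {}" by auto
    then obtain u where u: "{x,u} \<in> G - H" unfolding NR_def by blast
    have un: "u < n" using simple_graph_edge[OF sR u] by auto
    have xNRv: "x \<notin> NR v" using x unfolding NR_def by auto
    have vNRv: "v \<notin> NR v" using simple_graph_edge[OF sR, of v v] unfolding NR_def by auto
    have xNRu: "x \<in> NR u" using u unfolding NR_def by (simp add: insert_commute)
    have zNRu: "z \<in> NR u" if "z \<in> NR v" "z \<noteq> u" for z
      using C1[OF xv u _ that(2)[symmetric]] that(1) unfolding NR_def by simp
    have xv_ne: "x \<noteq> v" using simple_graph_edge[OF sB x] by auto
    have big: "card (NR u) \<ge> card (NR v) + 1"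
    proof (cases "u \<in> NR v")
      case True
      have vNRu: "v \<in> NR u" using True unfolding NR_def by (simp add: insert_commute)
      have "insert x (insert v (NR v - {u})) \<subseteq> NR u" using xNRu vNRu zNRu by auto
      then have "card (insert x (insert v (NR v - {u}))) \<le> card (NR u)" using finNR by (rule card_mono[rotated])
      moreover have "card (insert x (insert v (NR v - {u}))) = card (NR v - {u}) + 2"
        using xNRv vNRv xv_ne finNR by simp
      moreover have "card (NR v - {u}) = card (NR v) - 1" using True finNR by simp
      moreover have "NR v \<noteq> {}" using True by auto
      then have "card (NR v) \<ge> 1" using finNR[of v] card_gt_0_iff[of "NR v"] by linarith
      ultimately show ?thesis by linarith
    next
      case False
      have "insert x (NR v) \<subseteq> NR u" using xNRu zNRu False by auto
      then have "card (insert x (NR v)) \<le> card (NR u)" using finNR by (rule card_mono[rotated])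
      moreover have "card (insert x (NR v)) = card (NR v) + 1" using xNRv finNR by simp
      ultimately show ?thesis by linarith
    qed
    have "card (NB u) \<ge> card (NB v) + 1" using big rb[OF un] rb[OF v] by linarith
    then show False using vmax[OF un] by linarith
  qed
  have one: "card (NR v) = 1" if "v < n" for v
  proof -
    have "NB v = {}" using HG unfolding NB_def by auto
    then show ?thesis using rb[OF that] by simp
  qed
  define p where "p v = (SOME u. {v,u} \<in> G - H)" for v
  have pv: "NR v = {p v}" if vn: "v < n" for v
  proof -
    obtain w where w: "NR v = {w}" using card_1_singletonE[of "NR v"] one[OF vn] by auto
    then have "{v,w} \<in> G - H" unfolding NR_def by auto
    moreover have "\<And>u. {v,u} \<in> G - H \<Longrightarrow> u = w" using w unfolding NR_def by auto
    ultimately have "p v = w" unfolding p_def by (rule some_equality)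
    then show ?thesis using w by simp
  qed
  have "matchable G {..<n}"
    unfolding matchable_def
  proof (rule exI[of _ p], intro ballI conjI)
    fix v assume "v \<in> {..<n}"
    then have v: "v < n" by simp
    have e: "{v, p v} \<in> G - H" using pv[OF v] unfolding NR_def by auto
    then show "{v, p v} \<in> G" by simp
    show pn: "p v \<in> {..<n}" using simple_graph_edge[OF sR e] by simp
    show "p v \<noteq> v" using simple_graph_edge[OF sR e] by simp
    have "v \<in> NR (p v)" using e unfolding NR_def by (simp add: insert_commute)
    then show "p (p v) = v" using pv[of "p v"] pn by simp
  qed
  then show ?thesis using RG by blast
qed

lemma match_seq:
  fixes s :: "nat \<Rightarrow> nat"
  assumes "inj_on s {lo..<lo+2*t}"
    and "\<And>i. lo \<le> i \<Longrightarrow> Suc i < lo + 2*t \<Longrightarrow> {s i, s (Suc i)} \<in> E"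
  shows "matchable E (s ` {lo..<lo+2*t})"
  using assms
proof (induction t arbitrary: lo)
  case 0 then show ?case by (simp add: matchable_empty)
next
  case (Suc t)
  have split: "{lo..<lo+2*Suc t} = {lo, Suc lo} \<union> {Suc (Suc lo)..<Suc (Suc lo)+2*t}" by auto
  have inj2: "inj_on s {Suc (Suc lo)..<Suc (Suc lo)+2*t}"
    using Suc.prems(1) by (rule inj_on_subset) auto
  have m1: "matchable E (s ` {Suc (Suc lo)..<Suc (Suc lo)+2*t})"
    by (rule Suc.IH[OF inj2]) (use Suc.prems(2) in auto)
  have ne: "s lo \<noteq> s (Suc lo)" using Suc.prems(1) by (auto dest: inj_onD)
  have m2: "matchable E {s lo, s (Suc lo)}"
    by (rule matchable_pair[OF ne]) (use Suc.prems(2)[of lo] in auto)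
  have disj: "{s lo, s (Suc lo)} \<inter> s ` {Suc (Suc lo)..<Suc (Suc lo)+2*t} = {}"
    using Suc.prems(1) unfolding inj_on_def by fastforce
  have "s ` {lo..<lo+2*Suc t} = {s lo, s (Suc lo)} \<union> s ` {Suc (Suc lo)..<Suc (Suc lo)+2*t}"
    unfolding split by auto
  then show ?case using matchable_union[OF m2 m1 disj] by simp
qed

context
  fixes n :: nat and \<sigma> :: "nat \<Rightarrow> nat"
  assumes perm: "\<sigma> permutes {..<n}"
begin

lemma sperm: "permutation \<sigma>"
  using perm permutation_permutes by blast

lemma self_orb: "x \<in> orbit \<sigma> x"
  using permutation_self_in_orbit[OF sperm] .

lemma orb_sub: assumes "W \<subseteq> {..<n}" "\<sigma> ` W = W" "a \<in> W" shows "orbit \<sigma> a \<subseteq> W"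
proof
  fix y assume "y \<in> orbit \<sigma> a"
  then show "y \<in> W"
  proof induction
    case base
    have "\<sigma> a \<in> \<sigma> ` W" using assms(3) by (rule imageI)
    then show ?case using assms(2) by simp
  next
    case (step y)
    have "\<sigma> y \<in> \<sigma> ` W" using step.IH by (rule imageI)
    then show ?case using assms(2) by simp
  qed
qed

lemma orb_fin: "finite (orbit \<sigma> x)"
  using finite_orbit[OF self_orb] .

lemma orb_img: "\<sigma> ` orbit \<sigma> x = orbit \<sigma> x"
proof -
  have sub: "\<sigma> ` orbit \<sigma> x \<subseteq> orbit \<sigma> x" by (auto intro: orbit.step)
  have "inj_on \<sigma> (orbit \<sigma> x)" by (rule inj_on_subset[OF permutes_inj[OF perm] subset_UNIV])
  then have "card (\<sigma> ` orbit \<sigma> x) = card (orbit \<sigma> x)" by (rule card_image)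
  then show ?thesis using sub orb_fin by (simp add: card_subset_eq)
qed

lemma orb_eq: "y \<in> orbit \<sigma> x \<Longrightarrow> orbit \<sigma> y = orbit \<sigma> x"
proof -
  assume y: "y \<in> orbit \<sigma> x"
  have xy: "x \<in> orbit \<sigma> y" using orbit_swap[OF self_orb y] .
  show ?thesis
  proof
    show "orbit \<sigma> y \<subseteq> orbit \<sigma> x"
    proof fix z assume "z \<in> orbit \<sigma> y" then show "z \<in> orbit \<sigma> x" by (rule orbit_trans[OF _ y]) qed
    show "orbit \<sigma> x \<subseteq> orbit \<sigma> y"
    proof fix z assume "z \<in> orbit \<sigma> x" then show "z \<in> orbit \<sigma> y" by (rule orbit_trans[OF _ xy]) qed
  qed
qed

lemma orb_disj: assumes "b \<notin> orbit \<sigma> a" shows "orbit \<sigma> b \<inter> orbit \<sigma> a = {}"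
proof (rule ccontr)
  assume "orbit \<sigma> b \<inter> orbit \<sigma> a \<noteq> {}"
  then obtain y where y: "y \<in> orbit \<sigma> b" "y \<in> orbit \<sigma> a" by blast
  have "orbit \<sigma> b = orbit \<sigma> a" using orb_eq[OF y(1)] orb_eq[OF y(2)] by simp
  then show False using assms self_orb[of b] by simp
qed

lemma img_diff: "\<sigma> ` W = W \<Longrightarrow> \<sigma> ` Q = Q \<Longrightarrow> \<sigma> ` (W - Q) = W - Q"
  using permutes_inj[OF perm] by (simp add: image_set_diff)

definition "ocard x = funpow_dist1 \<sigma> x x"

lemma orb_enum: "orbit \<sigma> x = (\<lambda>i. (\<sigma> ^^ i) x) ` {0..<ocard x}"
  unfolding ocard_def using orbit_conv_funpow_dist1[OF self_orb] .

lemma orb_inj: "inj_on (\<lambda>i. (\<sigma> ^^ i) x) {0..<ocard x}"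
  unfolding ocard_def using inj_on_funpow_dist1[OF self_orb] .

lemma orb_card: "card (orbit \<sigma> x) = ocard x"
  using orb_enum orb_inj by (simp add: card_image)

lemma even_orbit_match:
  assumes "even (card (orbit \<sigma> x))" "\<And>y. y \<in> orbit \<sigma> x \<Longrightarrow> {y, \<sigma> y} \<in> E"
  shows "matchable E (orbit \<sigma> x)"
proof -
  let ?s = "\<lambda>i. (\<sigma> ^^ i) x"
  let ?t = "ocard x div 2"
  have m: "ocard x = 0 + 2 * ?t" using assms(1) orb_card by simp
  have "matchable E (?s ` {0..<0+2*?t})"
  proof (rule match_seq)
    show "inj_on ?s {0..<0+2*?t}" using orb_inj m by simp
    fix i assume "0 \<le> i" "Suc i < 0 + 2 * ?t"
    have "?s i \<in> orbit \<sigma> x" by (rule funpow_in_orbit[OF self_orb])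
    then show "{?s i, ?s (Suc i)} \<in> E" using assms(2) by simp
  qed
  then show ?thesis using orb_enum m by simp
qed

lemma odd_orbit_match:
  assumes "odd (card (orbit \<sigma> x))"
    "\<And>y. y \<in> orbit \<sigma> x \<Longrightarrow> y \<noteq> x \<Longrightarrow> \<sigma> y \<noteq> x \<Longrightarrow> {y, \<sigma> y} \<in> E"
  shows "matchable E (orbit \<sigma> x - {x})"
proof -
  let ?s = "\<lambda>i. (\<sigma> ^^ i) x"
  let ?t = "ocard x div 2"
  have m: "ocard x = 1 + 2 * ?t" using assms(1) orb_card by simp
  have inj: "inj_on ?s {0..<ocard x}" by (rule orb_inj)
  have "matchable E (?s ` {1..<1+2*?t})"
  proof (rule match_seq)
    show "inj_on ?s {1..<1+2*?t}" using inj m by (auto intro: inj_on_subset)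
    fix i assume i: "1 \<le> i" "Suc i < 1 + 2 * ?t"
    have "?s i \<in> orbit \<sigma> x" by (rule funpow_in_orbit[OF self_orb])
    moreover have "?s i \<noteq> x"
    proof
      assume "?s i = x"
      then have eq: "?s i = ?s 0" by simp
      have "i \<in> {0..<ocard x}" "0 \<in> {0..<ocard x}" using i m by auto
      then have "i = 0" using inj_onD[OF inj eq] by blast
      then show False using i by simp
    qed
    moreover have "?s (Suc i) \<noteq> x"
    proof
      assume "?s (Suc i) = x"
      then have eq: "?s (Suc i) = ?s 0" by simp
      have "Suc i \<in> {0..<ocard x}" "0 \<in> {0..<ocard x}" using i m by auto
      then have "Suc i = 0" using inj_onD[OF inj eq] by blast
      then show False by simp
    qed
    ultimately show "{?s i, ?s (Suc i)} \<in> E" using assms(2) by simp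
  qed
  moreover have "?s ` {1..<1+2*?t} = orbit \<sigma> x - {x}"
  proof -
    have "{0..<ocard x} = insert 0 {1..<1+2*?t}" using m by auto
    then have "orbit \<sigma> x = insert x (?s ` {1..<1+2*?t})" using orb_enum by simp
    moreover have "x \<notin> ?s ` {1..<1+2*?t}"
    proof
      assume "x \<in> ?s ` {1..<1+2*?t}"
      then obtain i where i: "i \<in> {1..<1+2*?t}" "?s i = ?s 0" by auto
      have "i \<in> {0..<ocard x}" "0 \<in> {0..<ocard x}" using i m by auto
      then have "i = 0" using inj_onD[OF inj i(2)] by blast
      then show False using i by simp
    qed
    ultimately show ?thesis by auto
  qed
  ultimately show ?thesis by simp
qed

lemma even_count:
  assumes "S \<subseteq> {..<n}" "\<sigma> ` S = S" "\<forall>x\<in>S. even (card (orbit \<sigma> x))"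
  shows "even (card S)"
  using assms
proof (induction "card S" arbitrary: S rule: less_induct)
  case less
  show ?case
  proof (cases "S = {}")
    case True then show ?thesis by simp
  next
    case False
    then obtain a where a: "a \<in> S" by blast
    have O: "orbit \<sigma> a \<subseteq> S" using orb_sub less.prems a by blast
    have finS: "finite S" using less.prems(1) finite_subset by blast
    have c: "card S = card (orbit \<sigma> a) + card (S - orbit \<sigma> a)"
    proof -
      have "card (S - orbit \<sigma> a) = card S - card (orbit \<sigma> a)" by (rule card_Diff_subset[OF orb_fin O])
      moreover have "card (orbit \<sigma> a) \<le> card S" by (rule card_mono[OF finS O])
      ultimately show ?thesis by linarith
    qed
    have "card (orbit \<sigma> a) > 0" using self_orb[of a] orb_fin[of a] card_gt_0_iff by blast
    then have lt: "card (S - orbit \<sigma> a) < card S" using c by linarith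
    have "even (card (S - orbit \<sigma> a))"
      by (rule less.hyps[OF lt]) (use less.prems img_diff orb_img in auto)
    then show ?thesis using c less.prems(3) a by simp
  qed
qed


lemma pm:
  assumes "W \<subseteq> {..<n}" "\<sigma> ` W = W" "even (card W)" "simple_graph n E"
    "\<forall>w\<in>W. {w, \<sigma> w} \<in> E" "\<forall>v<n. \<sigma> v \<noteq> v"
  shows "\<exists>E'. simple_graph n E' \<and> (\<forall>v. deg E' v = deg E v) \<and> (\<forall>e. \<not> e \<subseteq> W \<longrightarrow> (e \<in> E' \<longleftrightarrow> e \<in> E)) \<and> matchable E' W"
  using assms
proof (induction "card W" arbitrary: W E rule: less_induct)
  case less
  note Wsub = less.prems(1) and Winv = less.prems(2) and Wev = less.prems(3) and sE = less.prems(4)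
    and sed = less.prems(5) and nofix = less.prems(6)
  have finW: "finite W" using Wsub finite_subset by blast
  have finish: "\<exists>E'. simple_graph n E' \<and> (\<forall>v. deg E' v = deg E v) \<and> (\<forall>e. \<not> e \<subseteq> W \<longrightarrow> (e \<in> E' \<longleftrightarrow> e \<in> E)) \<and> matchable E' W"
    if Q: "Q \<subseteq> W" "\<sigma> ` Q = Q" "Q \<noteq> {}" "even (card Q)"
      and E1: "simple_graph n E1" "\<forall>v. deg E1 v = deg E v" "\<forall>e. \<not> e \<subseteq> W \<longrightarrow> (e \<in> E1 \<longleftrightarrow> e \<in> E)"
        "\<forall>w\<in>W - Q. {w, \<sigma> w} \<in> E1" "matchable E1 Q"
    for Q E1
  proof -
    have finQ: "finite Q" using Q(1) finW finite_subset by blast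
    have cW: "card W = card Q + card (W - Q)"
    proof -
      have "card (W - Q) = card W - card Q" by (rule card_Diff_subset[OF finQ Q(1)])
      moreover have "card Q \<le> card W" by (rule card_mono[OF finW Q(1)])
      ultimately show ?thesis by linarith
    qed
    have "card Q > 0" using finQ Q(3) card_gt_0_iff by blast
    then have lt: "card (W - Q) < card W" using cW by linarith
    have inv: "\<sigma> ` (W - Q) = W - Q" using img_diff Winv Q(2) by blast
    have ev: "even (card (W - Q))" using cW Wev Q(4) by simp
    have "\<exists>E'. simple_graph n E' \<and> (\<forall>v. deg E' v = deg E1 v) \<and> (\<forall>e. \<not> e \<subseteq> W - Q \<longrightarrow> (e \<in> E' \<longleftrightarrow> e \<in> E1)) \<and> matchable E' (W - Q)"
      by (rule less.hyps[OF lt]) (use Wsub inv ev E1 nofix in auto)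
    then obtain E' where E': "simple_graph n E'" "\<forall>v. deg E' v = deg E1 v"
      "\<forall>e. \<not> e \<subseteq> W - Q \<longrightarrow> (e \<in> E' \<longleftrightarrow> e \<in> E1)" "matchable E' (W - Q)" by blast
    have mQ: "matchable E' Q"
    proof (rule matchable_transfer[OF E1(5)])
      fix u v assume "u \<in> Q" "v \<in> Q" "{u,v} \<in> E1"
      then show "{u,v} \<in> E'" using E'(3) by auto
    qed
    have "matchable E' (Q \<union> (W - Q))" by (rule matchable_union[OF mQ E'(4)]) auto
    moreover have "Q \<union> (W - Q) = W" using Q(1) by auto
    ultimately have "matchable E' W" by simp
    moreover have "\<forall>e. \<not> e \<subseteq> W \<longrightarrow> (e \<in> E' \<longleftrightarrow> e \<in> E)" using E'(3) E1(3) by blast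
    ultimately show ?thesis using E'(1,2) E1(2) by auto
  qed
  show ?case
  proof (cases "W = {}")
    case True then show ?thesis using sE by (auto simp: matchable_empty)
  next
    case False
    then obtain a where a: "a \<in> W" by blast
    define Oa where "Oa = orbit \<sigma> a"
    have OW: "Oa \<subseteq> W" unfolding Oa_def using orb_sub[OF Wsub Winv a] .
    have aO: "a \<in> Oa" unfolding Oa_def by (rule self_orb)
    have Oinv: "\<sigma> ` Oa = Oa" unfolding Oa_def by (rule orb_img)
    show ?thesis
    proof (cases "even (card Oa)")
      case True
      have "matchable E Oa" unfolding Oa_def
        by (rule even_orbit_match) (use True OW sed in \<open>auto simp: Oa_def\<close>)
      then show ?thesis by (intro finish[of Oa E]) (use OW Oinv aO True sE sed in auto)
    next
      case oddO: False
      have "\<exists>b\<in>W - Oa. odd (card (orbit \<sigma> b))"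
      proof (rule ccontr)
        assume "\<not> ?thesis"
        then have "even (card (W - Oa))"
          by (intro even_count) (use Wsub Winv Oinv img_diff in auto)
        moreover have "card W = card Oa + card (W - Oa)"
        proof -
          have fO: "finite Oa" unfolding Oa_def by (rule orb_fin)
          have "card (W - Oa) = card W - card Oa" by (rule card_Diff_subset[OF fO OW])
          moreover have "card Oa \<le> card W" by (rule card_mono[OF finW OW])
          ultimately show ?thesis by linarith
        qed
        ultimately show False using Wev oddO by simp
      qed
      then obtain b where b: "b \<in> W" "b \<notin> Oa" and oddO2: "odd (card (orbit \<sigma> b))" by blast
      define Ob where "Ob = orbit \<sigma> b"
      have O2W: "Ob \<subseteq> W" unfolding Ob_def using orb_sub[OF Wsub Winv b(1)] .
      have bO2: "b \<in> Ob" unfolding Ob_def by (rule self_orb)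
      have O2inv: "\<sigma> ` Ob = Ob" unfolding Ob_def by (rule orb_img)
      have disj: "Ob \<inter> Oa = {}" unfolding Ob_def Oa_def by (rule orb_disj) (use b in \<open>simp add: Oa_def\<close>)
      define Q where "Q = Oa \<union> Ob"
      have QW: "Q \<subseteq> W" using OW O2W Q_def by auto
      have Qinv: "\<sigma> ` Q = Q" using Oinv O2inv Q_def by (simp add: image_Un)
      have fO: "finite Oa" "finite Ob" unfolding Oa_def Ob_def by (rule orb_fin)+
      have evQ: "even (card Q)"
      proof -
        have "card Q = card Oa + card Ob" unfolding Q_def using fO disj by (simp add: card_Un_disjoint Int_commute)
        then show ?thesis using oddO oddO2 Ob_def by simp
      qed
      have QE: "Q \<noteq> {}" using aO Q_def by auto
      show ?thesis
      proof (cases "\<exists>x\<in>Oa. \<exists>y\<in>Ob. {x,y} \<in> E")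
        case True
        then obtain x y where xy: "x \<in> Oa" "y \<in> Ob" "{x,y} \<in> E" by blast
        have ox: "orbit \<sigma> x = Oa" unfolding Oa_def using orb_eq xy(1) Oa_def by simp
        have oy: "orbit \<sigma> y = Ob" unfolding Ob_def using orb_eq xy(2) Ob_def by simp
        have m1: "matchable E (Oa - {x})"
          using odd_orbit_match[of x E] oddO ox OW sed by auto
        have m2: "matchable E (Ob - {y})"
          using odd_orbit_match[of y E] oddO2 oy O2W sed Ob_def by auto
        have xney: "x \<noteq> y" using xy disj by auto
        have m3: "matchable E {x,y}" by (rule matchable_pair[OF xney xy(3)])
        have m12: "matchable E ((Oa - {x}) \<union> (Ob - {y}))"
          by (rule matchable_union[OF m1 m2]) (use disj in blast)
        have "matchable E (((Oa - {x}) \<union> (Ob - {y})) \<union> {x,y})"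
          by (rule matchable_union[OF m12 m3]) (use disj xy in blast)
        moreover have "((Oa - {x}) \<union> (Ob - {y})) \<union> {x,y} = Q" using xy Q_def by auto
        ultimately have "matchable E Q" by simp
        then show ?thesis by (intro finish[of Q E]) (use QW Qinv QE evQ sE sed in auto)
      next
        case noedge: False
        have san: "\<sigma> a \<in> Oa" unfolding Oa_def by (rule orbit.base)
        have sbn: "\<sigma> b \<in> Ob" unfolding Ob_def by (rule orbit.base)
        have an: "a < n" "b < n" using a b Wsub by auto
        have dist: "distinct [a, \<sigma> a, b, \<sigma> b]"
          using nofix an aO san bO2 sbn disj by auto
        define E1 where "E1 = switch E a (\<sigma> a) b (\<sigma> b)"
        have sw: "simple_graph n E1 \<and> (\<forall>v. deg E1 v = deg E v)"
          unfolding E1_def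
          by (rule switch_props[OF sE dist]) (use sed a b noedge aO bO2 san sbn in auto)
        have inE1: "e \<in> E1" if "e \<in> E" "e \<noteq> {a, \<sigma> a}" "e \<noteq> {b, \<sigma> b}" for e
          using that unfolding E1_def switch_def by auto
        have abE1: "{a,b} \<in> E1" unfolding E1_def switch_def by auto
        have m1: "matchable E1 (Oa - {a})"
        proof -
          have "matchable E1 (orbit \<sigma> a - {a})"
          proof (rule odd_orbit_match)
            show "odd (card (orbit \<sigma> a))" using oddO Oa_def by simp
            fix y assume y: "y \<in> orbit \<sigma> a" "y \<noteq> a" "\<sigma> y \<noteq> a"
            have "{y, \<sigma> y} \<in> E" using y OW sed Oa_def by auto
            moreover have "{y, \<sigma> y} \<noteq> {a, \<sigma> a}" using y by (auto simp: doubleton_eq_iff)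
            moreover have "{y, \<sigma> y} \<noteq> {b, \<sigma> b}" using y disj bO2 sbn Oa_def by (auto simp: doubleton_eq_iff)
            ultimately show "{y, \<sigma> y} \<in> E1" by (rule inE1)
          qed
          then show ?thesis using Oa_def by simp
        qed
        have m2: "matchable E1 (Ob - {b})"
        proof -
          have "matchable E1 (orbit \<sigma> b - {b})"
          proof (rule odd_orbit_match)
            show "odd (card (orbit \<sigma> b))" using oddO2 by simp
            fix y assume y: "y \<in> orbit \<sigma> b" "y \<noteq> b" "\<sigma> y \<noteq> b"
            have "{y, \<sigma> y} \<in> E" using y O2W sed Ob_def by auto
            moreover have "{y, \<sigma> y} \<noteq> {a, \<sigma> a}" using y disj aO san Ob_def by (auto simp: doubleton_eq_iff)
            moreover have "{y, \<sigma> y} \<noteq> {b, \<sigma> b}" using y by (auto simp: doubleton_eq_iff)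
            ultimately show "{y, \<sigma> y} \<in> E1" by (rule inE1)
          qed
          then show ?thesis using Ob_def by simp
        qed
        have anb: "a \<noteq> b" using dist by simp
        have m3: "matchable E1 {a,b}" by (rule matchable_pair[OF anb abE1])
        have m12: "matchable E1 ((Oa - {a}) \<union> (Ob - {b}))"
          by (rule matchable_union[OF m1 m2]) (use disj in blast)
        have "matchable E1 (((Oa - {a}) \<union> (Ob - {b})) \<union> {a,b})"
          by (rule matchable_union[OF m12 m3]) (use disj aO bO2 in blast)
        moreover have "((Oa - {a}) \<union> (Ob - {b})) \<union> {a,b} = Q" using aO bO2 Q_def by auto
        ultimately have mQ: "matchable E1 Q" by simp
        have sub4: "{a, \<sigma> a} \<subseteq> W" "{b, \<sigma> b} \<subseteq> W" "{a, b} \<subseteq> W" "{\<sigma> a, \<sigma> b} \<subseteq> W"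
          using aO san bO2 sbn OW O2W by auto
        have agree: "\<forall>e. \<not> e \<subseteq> W \<longrightarrow> (e \<in> E1 \<longleftrightarrow> e \<in> E)"
        proof (intro allI impI)
          fix e assume "\<not> e \<subseteq> W"
          then have "e \<noteq> {a, \<sigma> a}" "e \<noteq> {b, \<sigma> b}" "e \<noteq> {a, b}" "e \<noteq> {\<sigma> a, \<sigma> b}" using sub4 by auto
          then show "e \<in> E1 \<longleftrightarrow> e \<in> E" unfolding E1_def switch_def by auto
        qed
        have sedQ: "\<forall>w\<in>W - Q. {w, \<sigma> w} \<in> E1"
        proof
          fix w assume w: "w \<in> W - Q"
          have "{w, \<sigma> w} \<in> E" using w sed by auto
          moreover have "w \<noteq> a" "w \<noteq> \<sigma> a" "w \<noteq> b" "w \<noteq> \<sigma> b" using w aO san bO2 sbn Q_def by auto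
          ultimately show "{w, \<sigma> w} \<in> E1" using inE1 by auto
        qed
        show ?thesis by (rule finish[OF QW Qinv QE evQ]) (use sw agree sedQ mQ in auto)
      qed
    qed
  qed
qed

end

lemma tau_to_graphical:
  assumes R: "realizes n d E" and t: "tau_star n E \<ge> real n / 2" and ev: "even n"
  shows "graphical n (\<lambda>i. d i - 1)"
proof -
  have sE: "simple_graph n E" using R unfolding realizes_def by simp
  define A where "A v = {u. u < n \<and> {v,u} \<in> E}" for v
  have UA: "\<Union> (A ` J) = nbhd n E J" for J unfolding A_def nbhd_def by auto
  have "\<exists>r. inj_on r {..<n} \<and> (\<forall>i\<in>{..<n}. r i \<in> A i)"
  proof (rule hall)
    show "finite {..<n}" by simp
    show "\<forall>i\<in>{..<n}. finite (A i)" unfolding A_def by auto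
    show "\<forall>J\<subseteq>{..<n}. card J \<le> card (\<Union> (A ` J))"
    proof (intro allI impI)
      fix J assume "J \<subseteq> {..<n}"
      then show "card J \<le> card (\<Union> (A ` J))" unfolding UA by (rule tau_hall[OF sE t])
    qed
  qed
  then obtain r where r: "inj_on r {..<n}" "\<And>i. i < n \<Longrightarrow> r i \<in> A i" by auto
  have rimg: "r ` {..<n} = {..<n}"
    by (rule endo_inj_surj) (use r A_def in auto)
  define \<sigma> where "\<sigma> v = (if v < n then r v else v)" for v
  have inj\<sigma>: "inj_on \<sigma> {..<n}" using r(1) unfolding \<sigma>_def inj_on_def by auto
  have img\<sigma>: "\<sigma> ` {..<n} = {..<n}" using rimg unfolding \<sigma>_def by auto
  have perm: "\<sigma> permutes {..<n}"
    by (rule bij_imp_permutes[OF bij_betw_imageI[OF inj\<sigma> img\<sigma>]]) (simp add: \<sigma>_def)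
  have edge: "{w, \<sigma> w} \<in> E" if "w < n" for w using r(2)[OF that] that unfolding A_def \<sigma>_def by auto
  have nofix: "\<forall>v<n. \<sigma> v \<noteq> v"
  proof (intro allI impI)
    fix v assume v: "v < n"
    show "\<sigma> v \<noteq> v" using simple_graph_edge[OF sE edge[OF v]] by simp
  qed
  have "\<exists>E'. simple_graph n E' \<and> (\<forall>v. deg E' v = deg E v) \<and> (\<forall>e. \<not> e \<subseteq> {..<n} \<longrightarrow> (e \<in> E' \<longleftrightarrow> e \<in> E)) \<and> matchable E' {..<n}"
    by (rule pm[OF perm]) (use img\<sigma> ev sE edge nofix in auto)
  then obtain E' where E': "simple_graph n E'" "\<forall>v. deg E' v = deg E v" "matchable E' {..<n}" by blast
  have "realizes n d E'" using E' R unfolding realizes_def by auto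
  then show ?thesis using matchable_minus_one E'(3) by blast
qed

theorem corollary21:
  fixes n :: nat and d :: "nat \<Rightarrow> int"
  assumes "graphical n d" and "even n"
  shows "mu_bar n d > 0 \<longleftrightarrow> graphical n (\<lambda>i. d i - 1)"
proof
  assume "mu_bar n d > 0"
  then obtain E where E: "realizes n d E" "mu n E > 0" using mu_bar_pos_iff by blast
  then have "tau_star n E \<ge> real n / 2" using mu_pos_iff E(1) unfolding realizes_def by blast
  then show "graphical n (\<lambda>i. d i - 1)" using tau_to_graphical E(1) assms(2) by blast
next
  assume g: "graphical n (\<lambda>i. d i - 1)"
  obtain G0 where "realizes n d G0" using assms(1) unfolding graphical_def by blast
  moreover obtain H0 where "realizes n (\<lambda>i. d i - 1) H0" using g unfolding graphical_def by blast
  ultimately obtain G where G: "realizes n d G" "matchable G {..<n}" using kundu by blast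
  have "tau_star n G \<ge> real n / 2" using matchable_tau[OF G(2)] .
  then have "mu n G > 0" using mu_pos_iff G(1) unfolding realizes_def by blast
  then show "mu_bar n d > 0" using mu_bar_pos_iff G(1) by blast
qed

end
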